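(* The class of liberal extensions is Morita invariant: if $A/B$ is a liberal extension and $A/B$ is Morita equivalent to $A'/B'$, then $A'/B'$ is a liberal extension.
   Context: All rings have identity, subrings contain the identity, modules are unital; a ring extension $A/B$ means $B$ is a subring of $A$. $V_A(B)=\{a\in A\mid ba=ab \text{ for all } b\in B\}$. $A/B$ is a liberal extension if there are finitely many $v_1,\dots,v_n\in V_A(B)$ with $A=\sum_{i=1}^n v_iB$. For bimodules ${}_AX_{A'}$, ${}_AY_{A'}$, write $X\mid Y$ if $X$ is isomorphic to a direct summand of a finite direct sum of copies of $Y$, and $X\sim Y$ if $X\mid Y$ and $Y\mid X$. $\mathrm{End}^r({}_AM)$ denotes the ring of left $A$-endomorphisms of $M$ acting on the right. A bimodule ${}_AM_{A'}$ is a Morita module if ${}_AM\sim{}_AA$ and $\mathrm{End}^r({}_AM)=A'$. Ring extensions $A/B$ and $A'/B'$ are Morita equivalent if there exist Morita modules ${}_AM_{A'}$ and ${}_BN_{B'}$ with ${}_AA\otimes_BN_{B'}\cong{}_AM_{B'}$. A class $\mathscr C$ of ring extensions is Morita invariant if whenever $A/B\in\mathscr C$ and $A/B$ is Morita equivalent to $A'/B'$, then $A'/B'\in\mathscr C$. *)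

theory Defs
  imports Main "HOL-Library.Poly_Mapping"
begin

(* Rings are types of class ring_1 (the ring A is UNIV of its type);
  subrings are sets. Modules are given by a carrier set inside an
  ab_group_add type together with an action. *)

definition subring :: "'a::ring_1 set \<Rightarrow> bool" where
  "subring B \<longleftrightarrow> 1 \<in> B \<and> (\<forall>x\<in>B. \<forall>y\<in>B. x + y \<in> B \<and> x * y \<in> B \<and> - x \<in> B)"

definition centralizer :: "'a::ring_1 set \<Rightarrow> 'a set" where
  "centralizer B = {a. \<forall>b\<in>B. b * a = a * b}"

definition liberal_ext :: "'a::ring_1 set \<Rightarrow> bool" where
  "liberal_ext B \<longleftrightarrow> subring B \<and>
     (\<exists>vs :: 'a list. set vs \<subseteq> centralizer B \<and>
        (\<forall>a. \<exists>bs. length bs = length vs \<and> set bs \<subseteq> B \<and>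
                 a = (\<Sum>i<length vs. vs ! i * bs ! i)))"

definition lmodule :: "'r::ring_1 set \<Rightarrow> 'm::ab_group_add set \<Rightarrow> ('r \<Rightarrow> 'm \<Rightarrow> 'm) \<Rightarrow> bool" where
  "lmodule R C act \<longleftrightarrow>
     0 \<in> C \<and> (\<forall>x\<in>C. \<forall>y\<in>C. x + y \<in> C \<and> - x \<in> C) \<and>
     (\<forall>r\<in>R. \<forall>x\<in>C. act r x \<in> C) \<and>
     (\<forall>r\<in>R. \<forall>x\<in>C. \<forall>y\<in>C. act r (x + y) = act r x + act r y) \<and>
     (\<forall>r\<in>R. \<forall>s\<in>R. \<forall>x\<in>C. act (r + s) x = act r x + act s x \<and> act (r * s) x = act r (act s x)) \<and>
     (\<forall>x\<in>C. act 1 x = x)"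

definition rmodule :: "'s::ring_1 set \<Rightarrow> 'm::ab_group_add set \<Rightarrow> ('m \<Rightarrow> 's \<Rightarrow> 'm) \<Rightarrow> bool" where
  "rmodule S C act \<longleftrightarrow>
     0 \<in> C \<and> (\<forall>x\<in>C. \<forall>y\<in>C. x + y \<in> C \<and> - x \<in> C) \<and>
     (\<forall>s\<in>S. \<forall>x\<in>C. act x s \<in> C) \<and>
     (\<forall>s\<in>S. \<forall>x\<in>C. \<forall>y\<in>C. act (x + y) s = act x s + act y s) \<and>
     (\<forall>s\<in>S. \<forall>t\<in>S. \<forall>x\<in>C. act x (s + t) = act x s + act x t \<and> act x (s * t) = act (act x s) t) \<and>
     (\<forall>x\<in>C. act x 1 = x)"

definition bimodule :: "'r::ring_1 set \<Rightarrow> 's::ring_1 set \<Rightarrow> 'm::ab_group_add set \<Rightarrow>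
    ('r \<Rightarrow> 'm \<Rightarrow> 'm) \<Rightarrow> ('m \<Rightarrow> 's \<Rightarrow> 'm) \<Rightarrow> bool" where
  "bimodule R S C l r \<longleftrightarrow> lmodule R C l \<and> rmodule S C r \<and>
     (\<forall>a\<in>R. \<forall>s\<in>S. \<forall>x\<in>C. l a (r x s) = r (l a x) s)"

definition lmod_hom :: "'r::ring_1 set \<Rightarrow> 'x::ab_group_add set \<Rightarrow> ('r \<Rightarrow> 'x \<Rightarrow> 'x) \<Rightarrow>
    'y::ab_group_add set \<Rightarrow> ('r \<Rightarrow> 'y \<Rightarrow> 'y) \<Rightarrow> ('x \<Rightarrow> 'y) \<Rightarrow> bool" where
  "lmod_hom R CX aX CY aY f \<longleftrightarrow> f ` CX \<subseteq> CY \<and>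
     (\<forall>x\<in>CX. \<forall>y\<in>CX. f (x + y) = f x + f y) \<and>
     (\<forall>r\<in>R. \<forall>x\<in>CX. f (aX r x) = aY r (f x))"

definition dsum_carrier :: "nat \<Rightarrow> 'y::ab_group_add set \<Rightarrow> (nat \<Rightarrow> 'y) set" where
  "dsum_carrier k CY = {v. \<forall>i. (i < k \<longrightarrow> v i \<in> CY) \<and> (k \<le> i \<longrightarrow> v i = 0)}"

(* X | Y for left modules: X is isomorphic to a direct summand of Y^k for some k,
  i.e. there is a split monomorphism f : X \<rightarrow> Y^k with retraction g. *)
definition lmod_divides :: "'r::ring_1 set \<Rightarrow> 'x::ab_group_add set \<Rightarrow> ('r \<Rightarrow> 'x \<Rightarrow> 'x) \<Rightarrow>
    'y::ab_group_add set \<Rightarrow> ('r \<Rightarrow> 'y \<Rightarrow> 'y) \<Rightarrow> bool" where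
  "lmod_divides R CX aX CY aY \<longleftrightarrow>
     (\<exists>(k::nat) (f :: 'x \<Rightarrow> nat \<Rightarrow> 'y) (g :: (nat \<Rightarrow> 'y) \<Rightarrow> 'x).
        f ` CX \<subseteq> dsum_carrier k CY \<and>
        (\<forall>x\<in>CX. \<forall>y\<in>CX. f (x + y) = (\<lambda>i. f x i + f y i)) \<and>
        (\<forall>r\<in>R. \<forall>x\<in>CX. f (aX r x) = (\<lambda>i. aY r (f x i))) \<and>
        g ` dsum_carrier k CY \<subseteq> CX \<and>
        (\<forall>v\<in>dsum_carrier k CY. \<forall>w\<in>dsum_carrier k CY. g (\<lambda>i. v i + w i) = g v + g w) \<and>
        (\<forall>r\<in>R. \<forall>v\<in>dsum_carrier k CY. g (\<lambda>i. aY r (v i)) = aX r (g v)) \<and>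
        (\<forall>x\<in>CX. g (f x) = x))"

definition lmod_sim :: "'r::ring_1 set \<Rightarrow> 'x::ab_group_add set \<Rightarrow> ('r \<Rightarrow> 'x \<Rightarrow> 'x) \<Rightarrow>
    'y::ab_group_add set \<Rightarrow> ('r \<Rightarrow> 'y \<Rightarrow> 'y) \<Rightarrow> bool" where
  "lmod_sim R CX aX CY aY \<longleftrightarrow> lmod_divides R CX aX CY aY \<and> lmod_divides R CY aY CX aX"

(* Morita module _R M_S (R, S rings given as sets, M with carrier C):
  _R M \<sim> _R R and End^r(_R M) = S, the identification being via the right S-action,
  i.e. s \<mapsto> (x \<mapsto> x s) is a bijection from S onto the left R-endomorphisms of M. *)
definition morita_module :: "'r::ring_1 set \<Rightarrow> 's::ring_1 set \<Rightarrow> 'm::ab_group_add set \<Rightarrow>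
    ('r \<Rightarrow> 'm \<Rightarrow> 'm) \<Rightarrow> ('m \<Rightarrow> 's \<Rightarrow> 'm) \<Rightarrow> bool" where
  "morita_module R S C l r \<longleftrightarrow> bimodule R S C l r \<and>
     lmod_sim R C l R (\<lambda>a b. a * b) \<and>
     (\<forall>s\<in>S. \<forall>t\<in>S. (\<forall>x\<in>C. r x s = r x t) \<longrightarrow> s = t) \<and>
     (\<forall>f. lmod_hom R C l C l f \<longrightarrow> (\<exists>s\<in>S. \<forall>x\<in>C. f x = r x s))"

(* Tensor product A \<otimes>_B N (A = UNIV :: 'a, N = UNIV :: 'n with left B-action lN):
  the free abelian group on A \<times> N, ('a \<times> 'n) \<Rightarrow>\<^sub>0 int, modulo the subgroup generated by
  the bilinearity and B-balancedness relations. *)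
inductive_set tensor_rel :: "'a::ring_1 set \<Rightarrow> ('a \<Rightarrow> 'n::ab_group_add \<Rightarrow> 'n) \<Rightarrow> (('a \<times> 'n) \<Rightarrow>\<^sub>0 int) set"
  for B :: "'a set" and lN :: "'a \<Rightarrow> 'n \<Rightarrow> 'n" where
  zero: "0 \<in> tensor_rel B lN"
| addL: "frag_of (a + a', n) - frag_of (a, n) - frag_of (a', n) \<in> tensor_rel B lN"
| addR: "frag_of (a, n + n') - frag_of (a, n) - frag_of (a, n') \<in> tensor_rel B lN"
| bal: "b \<in> B \<Longrightarrow> frag_of (a * b, n) - frag_of (a, lN b n) \<in> tensor_rel B lN"
| plus: "x \<in> tensor_rel B lN \<Longrightarrow> y \<in> tensor_rel B lN \<Longrightarrow> x + y \<in> tensor_rel B lN"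
| neg: "x \<in> tensor_rel B lN \<Longrightarrow> - x \<in> tensor_rel B lN"

(* _A A \<otimes>_B N_{B'} \<cong> _A M_{B'} as A-B'-bimodules: an additive map from the free abelian
  group onto M whose kernel is exactly the relation subgroup (so it induces a group
  isomorphism (A \<otimes>_B N) \<cong> M), compatible with the left A-action
  a0 (a \<otimes> n) = (a0 a) \<otimes> n and the right B'-action (a \<otimes> n) b' = a \<otimes> (n b'). *)
definition tensor_iso :: "'a::ring_1 set \<Rightarrow> 'b::ring_1 set \<Rightarrow>
    ('a \<Rightarrow> 'n::ab_group_add \<Rightarrow> 'n) \<Rightarrow> ('n \<Rightarrow> 'b \<Rightarrow> 'n) \<Rightarrow>
    ('a \<Rightarrow> 'm::ab_group_add \<Rightarrow> 'm) \<Rightarrow> ('m \<Rightarrow> 'b \<Rightarrow> 'm) \<Rightarrow> bool" where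
  "tensor_iso B B' lN rN lM rM \<longleftrightarrow>
     (\<exists>\<Phi> :: (('a \<times> 'n) \<Rightarrow>\<^sub>0 int) \<Rightarrow> 'm.
        (\<forall>x y. \<Phi> (x + y) = \<Phi> x + \<Phi> y) \<and>
        surj \<Phi> \<and>
        {x. \<Phi> x = 0} = tensor_rel B lN \<and>
        (\<forall>a0 x. \<Phi> (frag_extend (\<lambda>(a, n). frag_of (a0 * a, n)) x) = lM a0 (\<Phi> x)) \<and>
        (\<forall>b'\<in>B'. \<forall>x. \<Phi> (frag_extend (\<lambda>(a, n). frag_of (a, rN n b')) x) = rM (\<Phi> x) b'))"

(* A/B and A'/B' are Morita equivalent via the Morita modules _A M_{A'} and _B N_{B'}
  (A = UNIV :: 'a, A' = UNIV :: 'b, M = UNIV :: 'm, N = UNIV :: 'n). *)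
definition morita_equivalent_via :: "'a::ring_1 set \<Rightarrow> 'b::ring_1 set \<Rightarrow>
    ('a \<Rightarrow> 'm::ab_group_add \<Rightarrow> 'm) \<Rightarrow> ('m \<Rightarrow> 'b \<Rightarrow> 'm) \<Rightarrow>
    ('a \<Rightarrow> 'n::ab_group_add \<Rightarrow> 'n) \<Rightarrow> ('n \<Rightarrow> 'b \<Rightarrow> 'n) \<Rightarrow> bool" where
  "morita_equivalent_via B B' lM rM lN rN \<longleftrightarrow>
     morita_module (UNIV :: 'a set) (UNIV :: 'b set) (UNIV :: 'm set) lM rM \<and>
     morita_module B B' (UNIV :: 'n set) lN rN \<and>
     tensor_iso B B' lN rN lM rM"

end

theory Submission
  imports Defs
begin

locale ctx =
  fixes B :: "'a::ring_1 set" and B' :: "'b::ring_1 set"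
    and lM :: "'a \<Rightarrow> 'm::ab_group_add \<Rightarrow> 'm" and rM :: "'m \<Rightarrow> 'b \<Rightarrow> 'm"
    and lN :: "'a \<Rightarrow> 'n::ab_group_add \<Rightarrow> 'n" and rN :: "'n \<Rightarrow> 'b \<Rightarrow> 'n"
    and Phi :: "(('a \<times> 'n) \<Rightarrow>\<^sub>0 int) \<Rightarrow> 'm" and vs :: "'a list"
  assumes subB: "subring B"
   and vsC: "set vs \<subseteq> centralizer B"
   and span: "\<forall>a. \<exists>bs. length bs = length vs \<and> set bs \<subseteq> B \<and> a = (\<Sum>i<length vs. vs ! i * bs ! i)"
   and mM: "morita_module (UNIV::'a set) (UNIV::'b set) (UNIV::'m set) lM rM"
   and mN: "morita_module B B' (UNIV::'n set) lN rN"
   and Phi_add: "\<forall>x y. Phi (x + y) = Phi x + Phi y"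
   and Phi_surj: "surj Phi"
   and Phi_ker: "{x. Phi x = 0} = tensor_rel B lN"
   and Phi_l: "\<forall>a0 x. Phi (frag_extend (\<lambda>(a, n). frag_of (a0 * a, n)) x) = lM a0 (Phi x)"
   and Phi_r: "\<forall>b'\<in>B'. \<forall>x. Phi (frag_extend (\<lambda>(a, n). frag_of (a, rN n b')) x) = rM (Phi x) b'"
begin

lemma B1: "1 \<in> B" and Bmul: "x \<in> B \<Longrightarrow> y \<in> B \<Longrightarrow> x * y \<in> B"
  and Badd: "x \<in> B \<Longrightarrow> y \<in> B \<Longrightarrow> x + y \<in> B"
  using subB by (auto simp: subring_def)

lemma B0: "0 \<in> B"
  using subB unfolding subring_def by (metis add.right_inverse)

lemma lM_add: "lM a (x + y) = lM a x + lM a y"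
  and lM_distrib: "lM (a + b) x = lM a x + lM b x"
  and lM_mult: "lM (a * b) x = lM a (lM b x)"
  and lM_one: "lM 1 x = x"
  using mM by (auto simp: morita_module_def bimodule_def lmodule_def)

lemma rM_add: "rM (x + y) s = rM x s + rM y s"
  and rM_distrib: "rM x (s + t) = rM x s + rM x t"
  and rM_mult: "rM x (s * t) = rM (rM x s) t"
  and rM_one: "rM x 1 = x"
  using mM by (auto simp: morita_module_def bimodule_def rmodule_def)

lemma lrM: "lM a (rM x s) = rM (lM a x) s"
  using mM by (auto simp: morita_module_def bimodule_def)

lemma rM_inj: "(\<And>x. rM x s = rM x t) \<Longrightarrow> s = t"
  using mM by (auto simp: morita_module_def)

lemma M_end: "lmod_hom UNIV UNIV lM UNIV lM f \<Longrightarrow> \<exists>s. \<forall>x. f x = rM x s"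
  using mM by (auto simp: morita_module_def)

lemma lN_add: "b \<in> B \<Longrightarrow> lN b (x + y) = lN b x + lN b y"
  and lN_distrib: "b \<in> B \<Longrightarrow> c \<in> B \<Longrightarrow> lN (b + c) x = lN b x + lN c x"
  and lN_mult: "b \<in> B \<Longrightarrow> c \<in> B \<Longrightarrow> lN (b * c) x = lN b (lN c x)"
  using mN by (auto simp: morita_module_def bimodule_def lmodule_def)

lemma N_end: "lmod_hom B UNIV lN UNIV lN f \<Longrightarrow> \<exists>s\<in>B'. \<forall>x. f x = rN x s"
  using mN by (auto simp: morita_module_def)

lemma N_div: "lmod_divides B UNIV lN B (\<lambda>a b. a * b)"
  using mN by (auto simp: morita_module_def lmod_sim_def)

lemma rM_zero: "rM 0 s = 0"
  using rM_add[of 0 0 s] by simp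
lemma rM_diff: "rM (x - y) s = rM x s - rM y s"
  by (metis diff_add_cancel rM_add add_diff_cancel)
lemma rM_zero2: "rM x 0 = 0"
  using rM_distrib[of x 0 0] by simp
lemma lM_zero: "lM a 0 = 0"
  using lM_add[of a 0 0] by simp
lemma lN_zero: "b \<in> B \<Longrightarrow> lN b 0 = 0"
  using lN_add[of b 0 0] by simp

lemma rM_sum2: "rM x (\<Sum>i\<in>I. f i) = (\<Sum>i\<in>I. rM x (f i))"
  by (induction I rule: infinite_finite_induct) (auto simp: rM_zero2 rM_distrib)
lemma rM_sum1: "rM (\<Sum>i\<in>I. f i) s = (\<Sum>i\<in>I. rM (f i) s)"
  by (induction I rule: infinite_finite_induct) (auto simp: rM_zero rM_add)
lemma lM_sum: "lM a (\<Sum>i\<in>I. f i) = (\<Sum>i\<in>I. lM a (f i))"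
  by (induction I rule: infinite_finite_induct) (auto simp: lM_zero lM_add)
lemma lN_sum: "b \<in> B \<Longrightarrow> lN b (\<Sum>i\<in>I. f i) = (\<Sum>i\<in>I. lN b (f i))"
  by (induction I rule: infinite_finite_induct) (auto simp: lN_zero lN_add)

lemma Phi0: "Phi 0 = 0"
  using Phi_add by (metis add_cancel_right_right add_0)
lemma Phi_diff: "Phi (x - y) = Phi x - Phi y"
  using Phi_add by (metis diff_add_cancel add_diff_cancel)

definition t where "t a n = Phi (frag_of (a, n))"

lemma rel_zero: "x \<in> tensor_rel B lN \<Longrightarrow> Phi x = 0"
  using Phi_ker by auto

lemma t_addL: "t (a + a') n = t a n + t a' n"
proof -
  have "Phi (frag_of (a + a', n) - frag_of (a, n) - frag_of (a', n)) = 0"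
    by (rule rel_zero) (rule tensor_rel.addL)
  then show ?thesis unfolding t_def by (simp add: Phi_diff Phi_add algebra_simps)
qed

lemma t_addR: "t a (n + n') = t a n + t a n'"
proof -
  have "Phi (frag_of (a, n + n') - frag_of (a, n) - frag_of (a, n')) = 0"
    by (rule rel_zero) (rule tensor_rel.addR)
  then show ?thesis unfolding t_def by (simp add: Phi_diff Phi_add algebra_simps)
qed

lemma t_bal: "b \<in> B \<Longrightarrow> t (a * b) n = t a (lN b n)"
proof -
  assume b: "b \<in> B"
  have "Phi (frag_of (a * b, n) - frag_of (a, lN b n)) = 0"
    by (rule rel_zero) (rule tensor_rel.bal[OF b])
  then show ?thesis unfolding t_def by (simp add: Phi_diff Phi_add algebra_simps)
qed

lemma t_zeroL: "t 0 n = 0" using t_addL[of 0 0 n] by simp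
lemma t_zeroR: "t a 0 = 0" using t_addR[of a 0 0] by simp
lemma t_sumL: "t (\<Sum>i\<in>I. f i) n = (\<Sum>i\<in>I. t (f i) n)"
  by (induction I rule: infinite_finite_induct) (auto simp: t_zeroL t_addL)
lemma t_sumR: "t a (\<Sum>i\<in>I. f i) = (\<Sum>i\<in>I. t a (f i))"
  by (induction I rule: infinite_finite_induct) (auto simp: t_zeroR t_addR)
lemma t_diffR: "t a (n - n') = t a n - t a n'"
  by (metis diff_add_cancel t_addR add_diff_cancel)

lemma t_l: "lM a0 (t a n) = t (a0 * a) n"
  using Phi_l unfolding t_def by (metis (no_types, lifting) frag_extend_of case_prod_conv)

lemma t_r: "b' \<in> B' \<Longrightarrow> rM (t a n) b' = t a (rN n b')"
  using Phi_r unfolding t_def by (metis (no_types, lifting) frag_extend_of case_prod_conv)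

lemma M_induct:
  assumes "P 0" and "\<And>a n. P (t a n)" and "\<And>x y. P x \<Longrightarrow> P y \<Longrightarrow> P (x - y)"
  shows "P m"
proof -
  obtain x where m: "m = Phi x" using Phi_surj by (metis surjD)
  have "Poly_Mapping.keys x \<subseteq> UNIV" by simp
  then have "P (Phi x)"
  proof (induction x rule: frag_induction)
    case zero then show ?case using assms(1) by (simp add: Phi0)
  next
    case (one z) then show ?case using assms(2) unfolding t_def by (cases z) auto
  next
    case (diff a b) then show ?case using assms(3) by (simp add: Phi_diff)
  qed
  then show ?thesis using m by simp
qed

lemma span_M: "\<exists>ns. m = (\<Sum>i<length vs. t (vs!i) (ns i))"
proof (induction m rule: M_induct)
  case 1
  show ?case by (rule exI[of _ "\<lambda>_. 0"]) (simp add: t_zeroR)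
next
  case (2 a n)
  obtain bs where bs: "length bs = length vs" "set bs \<subseteq> B" "a = (\<Sum>i<length vs. vs ! i * bs ! i)"
    using span by blast
  have "t a n = (\<Sum>i<length vs. t (vs ! i * bs ! i) n)" using bs(3) t_sumL by metis
  also have "\<dots> = (\<Sum>i<length vs. t (vs ! i) (lN (bs ! i) n))"
    by (rule sum.cong) (use bs in \<open>auto intro!: t_bal\<close>)
  finally show ?case by (intro exI[of _ "\<lambda>i. lN (bs ! i) n"])
next
  case (3 x y)
  then obtain n1 n2 where "x = (\<Sum>i<length vs. t (vs!i) (n1 i))" "y = (\<Sum>i<length vs. t (vs!i) (n2 i))"
    by blast
  then have "x - y = (\<Sum>i<length vs. t (vs!i) (n1 i - n2 i))"
    by (simp add: t_diffR sum_subtractf)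
  then show ?case by (intro exI[of _ "\<lambda>i. n1 i - n2 i"])
qed

definition Tv :: "'a \<Rightarrow> (('a \<times> 'n) \<Rightarrow>\<^sub>0 int) \<Rightarrow> (('a \<times> 'n) \<Rightarrow>\<^sub>0 int)" where
  "Tv v = frag_extend (\<lambda>(a, n). frag_of (a * v, n))"

definition La :: "'a \<Rightarrow> (('a \<times> 'n) \<Rightarrow>\<^sub>0 int) \<Rightarrow> (('a \<times> 'n) \<Rightarrow>\<^sub>0 int)" where
  "La a0 = frag_extend (\<lambda>(a, n). frag_of (a0 * a, n))"

lemma Tv_rel:
  assumes v: "v \<in> centralizer B" and x: "x \<in> tensor_rel B lN"
  shows "Tv v x \<in> tensor_rel B lN"
  using x
proof induction
  case zero then show ?case by (simp add: Tv_def tensor_rel.zero)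
next
  case (addL a a' n)
  show ?case unfolding Tv_def by (simp add: frag_extend_diff distrib_right tensor_rel.addL)
next
  case (addR a n n')
  show ?case unfolding Tv_def by (simp add: frag_extend_diff tensor_rel.addR)
next
  case (bal b a n)
  have "a * b * v = a * v * b" using v bal by (auto simp: centralizer_def mult.assoc)
  then show ?case unfolding Tv_def using bal by (simp add: frag_extend_diff tensor_rel.bal)
next
  case (plus x y) then show ?case by (simp add: Tv_def frag_extend_add tensor_rel.plus)
next
  case (neg x) then show ?case by (simp add: Tv_def frag_extend_minus tensor_rel.neg)
qed

lemma ker: "Phi x = 0 \<Longrightarrow> x \<in> tensor_rel B lN"
  using Phi_ker by auto

lemma Tv_La: "Tv v (La a0 x) = La a0 (Tv v x)"
proof -
  have "Poly_Mapping.keys x \<subseteq> UNIV" by simp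
  then show ?thesis
  proof (induction x rule: frag_induction)
    case zero then show ?case by (simp add: Tv_def La_def)
  next
    case (one z) then show ?case by (cases z) (simp add: Tv_def La_def mult.assoc)
  next
    case (diff a b) then show ?case by (simp add: Tv_def La_def frag_extend_diff)
  qed
qed

lemma central_w:
  assumes v: "v \<in> centralizer B"
  shows "\<exists>w. \<forall>a n. rM (t a n) w = t (a * v) n"
proof -
  define phi where "phi m = Phi (Tv v (SOME x. Phi x = m))" for m
  have phiP: "phi (Phi x) = Phi (Tv v x)" for x
  proof -
    define y where "y = (SOME y. Phi y = Phi x)"
    have "Phi y = Phi x" unfolding y_def by (rule someI) (rule refl)
    then have "Phi (y - x) = 0" by (simp add: Phi_diff)
    then have "Tv v (y - x) \<in> tensor_rel B lN" using Tv_rel[OF v] ker by blast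
    then have "Phi (Tv v y - Tv v x) = 0" using rel_zero by (simp add: Tv_def frag_extend_diff)
    then show ?thesis unfolding phi_def y_def[symmetric] by (simp add: Phi_diff)
  qed
  have "lmod_hom UNIV UNIV lM UNIV lM phi"
    unfolding lmod_hom_def
  proof (intro conjI ballI)
    show "phi ` UNIV \<subseteq> UNIV" by simp
  next
    fix m1 m2 :: 'm
    obtain x1 x2 where "m1 = Phi x1" "m2 = Phi x2" using Phi_surj by (metis surjD)
    then show "phi (m1 + m2) = phi m1 + phi m2"
      by (metis Phi_add phiP Tv_def frag_extend_add)
  next
    fix a0 :: 'a and m :: 'm
    obtain x where x: "m = Phi x" using Phi_surj by (metis surjD)
    have "lM a0 m = Phi (La a0 x)" using Phi_l x by (simp add: La_def)
    then have "phi (lM a0 m) = Phi (Tv v (La a0 x))" by (simp add: phiP)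
    also have "\<dots> = Phi (La a0 (Tv v x))" by (simp add: Tv_La)
    also have "\<dots> = lM a0 (phi m)" using Phi_l x by (simp add: La_def phiP)
    finally show "phi (lM a0 m) = lM a0 (phi m)" .
  qed
  then obtain w where w: "\<And>m. phi m = rM m w" using M_end by blast
  have "rM (t a n) w = t (a * v) n" for a n
    using w[of "t a n"] unfolding t_def by (simp add: phiP Tv_def)
  then show ?thesis by blast
qed

lemma w_central:
  assumes w: "\<forall>a n. rM (t a n) w = t (a * v) n"
  shows "w \<in> centralizer B'"
  unfolding centralizer_def
proof (intro CollectI ballI)
  fix b assume b: "b \<in> B'"
  have "rM (rM x b) w = rM (rM x w) b" for x
  proof (induction x rule: M_induct)
    case 1 then show ?case by (simp add: rM_zero)
  next
    case (2 a n) then show ?case using w b by (simp add: t_r)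
  next
    case (3 x y) then show ?case by (simp add: rM_diff)
  qed
  then show "b * w = w * b" by (intro rM_inj) (simp add: rM_mult)
qed

lemma main:
  assumes W: "\<forall>i<length vs. \<forall>a n. rM (t a n) (W i) = t (a * vs ! i) n"
  shows "\<exists>S. (\<forall>i. S i \<in> B') \<and> a' = (\<Sum>i<length vs. W i * S i)"
proof -
  let ?L = "length vs"
  define h where "h n = rM (t 1 n) a'" for n
  have h_add: "h (x + y) = h x + h y" for x y by (simp add: h_def t_addR rM_add)
  have h_zero: "h 0 = 0" by (simp add: h_def t_zeroR rM_zero)
  have h_sum: "h (\<Sum>j\<in>J. F j) = (\<Sum>j\<in>J. h (F j))" for J and F :: "nat \<Rightarrow> 'n"
    by (induction J rule: infinite_finite_induct) (auto simp: h_zero h_add)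
  have h_lin: "h (lN b n) = lM b (h n)" if "b \<in> B" for b n
  proof -
    have "t 1 (lN b n) = lM b (t 1 n)" using t_bal[OF that, of 1 n] t_l[of b 1 n] by simp
    then show ?thesis by (simp add: h_def lrM)
  qed
  obtain k and f :: "'n \<Rightarrow> nat \<Rightarrow> 'a" and g :: "(nat \<Rightarrow> 'a) \<Rightarrow> 'n" where
    f_in: "f ` UNIV \<subseteq> dsum_carrier k B" and
    f_add: "\<forall>x\<in>UNIV. \<forall>y\<in>UNIV. f (x + y) = (\<lambda>i. f x i + f y i)" and
    f_lin: "\<forall>r\<in>B. \<forall>x\<in>UNIV. f (lN r x) = (\<lambda>i. r * f x i)" and
    g_in: "g ` dsum_carrier k B \<subseteq> UNIV" and
    g_add: "\<forall>v\<in>dsum_carrier k B. \<forall>w\<in>dsum_carrier k B. g (\<lambda>i. v i + w i) = g v + g w" and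
    g_lin: "\<forall>r\<in>B. \<forall>v\<in>dsum_carrier k B. g (\<lambda>i. r * v i) = lN r (g v)" and
    gf: "\<forall>x\<in>UNIV. g (f x) = x"
    using N_div unfolding lmod_divides_def by (elim exE conjE) (rule that; assumption)
  have fB: "j < k \<Longrightarrow> f n j \<in> B" for n j using f_in by (auto simp: dsum_carrier_def)
  define e :: "nat \<Rightarrow> nat \<Rightarrow> 'a" where "e j = (\<lambda>i. if i = j then (1::'a) else 0)" for j
  have e_in: "j < k \<Longrightarrow> e j \<in> dsum_carrier k B" for j
    by (auto simp: e_def dsum_carrier_def B0 B1)
  define tr where "tr p v = (\<lambda>i. if i < p then v i else 0)" for p and v :: "nat \<Rightarrow> 'a"
  have g_dec: "g v = (\<Sum>j<k. lN (v j) (g (e j)))" if v: "v \<in> dsum_carrier k B" for v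
  proof -
    have "p \<le> k \<Longrightarrow> tr p v \<in> dsum_carrier k B \<and> g (tr p v) = (\<Sum>j<p. lN (v j) (g (e j)))" for p
    proof (induction p)
      case 0
      have z: "tr 0 v = (\<lambda>_. 0)" by (simp add: tr_def)
      have zin: "(\<lambda>_. 0::'a) \<in> dsum_carrier k B" by (simp add: dsum_carrier_def B0)
      have "g (\<lambda>_. 0) = 0" using g_add[rule_format, OF zin zin] by simp
      then show ?case using z zin by simp
    next
      case (Suc p)
      then have IH: "tr p v \<in> dsum_carrier k B" "g (tr p v) = (\<Sum>j<p. lN (v j) (g (e j)))" by auto
      have vp: "v p \<in> B" using v Suc.prems by (auto simp: dsum_carrier_def)
      have ein: "(\<lambda>i. v p * e p i) \<in> dsum_carrier k B"
        using Suc.prems vp by (auto simp: e_def dsum_carrier_def B0)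
      have eq: "tr (Suc p) v = (\<lambda>i. tr p v i + v p * e p i)"
        by (rule ext) (auto simp: tr_def e_def less_Suc_eq)
      have "tr (Suc p) v \<in> dsum_carrier k B"
        using v Suc.prems by (auto simp: tr_def dsum_carrier_def B0)
      moreover have "g (tr (Suc p) v) = g (tr p v) + g (\<lambda>i. v p * e p i)"
        unfolding eq using g_add[rule_format, OF IH(1) ein] by simp
      moreover have "g (\<lambda>i. v p * e p i) = lN (v p) (g (e p))"
        using g_lin vp e_in Suc.prems by auto
      ultimately show ?case using IH by simp
    qed
    moreover have "tr k v = v" using v by (auto simp: tr_def dsum_carrier_def)
    ultimately show ?thesis by (metis order_refl)
  qed
  define NS :: "'m \<Rightarrow> nat \<Rightarrow> 'n" where "NS m = (SOME ns. m = (\<Sum>i<?L. t (vs!i) (ns i)))" for m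
  have NS: "m = (\<Sum>i<?L. t (vs!i) (NS m i))" for m
    unfolding NS_def by (rule someI_ex[of "\<lambda>ns. m = (\<Sum>i<?L. t (vs!i) (ns i))", OF span_M])
  define G where "G i n = (\<Sum>j<k. lN (f n j) (NS (h (g (e j))) i))" for i n
  have Sex: "\<exists>s. s \<in> B' \<and> (\<forall>x. G i x = rN x s)" for i
  proof -
    have "lmod_hom B UNIV lN UNIV lN (G i)"
      unfolding lmod_hom_def
    proof (intro conjI ballI)
      show "G i ` UNIV \<subseteq> UNIV" by simp
    next
      fix x y :: 'n
      show "G i (x + y) = G i x + G i y"
        unfolding G_def f_add[rule_format, OF UNIV_I UNIV_I] sum.distrib[symmetric]
        by (rule sum.cong) (auto simp: lN_distrib fB)
    next
      fix b x assume b: "b \<in> B"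
      have "G i (lN b x) = (\<Sum>j<k. lN b (lN (f x j) (NS (h (g (e j))) i)))"
        unfolding G_def f_lin[rule_format, OF b UNIV_I]
        by (rule sum.cong) (auto simp: lN_mult b fB)
      also have "\<dots> = lN b (G i x)" unfolding G_def by (simp add: lN_sum b)
      finally show "G i (lN b x) = lN b (G i x)" .
    qed
    then show ?thesis using N_end by blast
  qed
  define S where "S i = (SOME s. s \<in> B' \<and> (\<forall>x. G i x = rN x s))" for i
  have S': "S i \<in> B' \<and> (\<forall>x. G i x = rN x (S i))" for i
    unfolding S_def by (rule someI_ex[of "\<lambda>s. s \<in> B' \<and> (\<forall>x. G i x = rN x s)", OF Sex])
  have S: "\<And>i. S i \<in> B'" "\<And>i x. G i x = rN x (S i)" using S' by auto
  have vsC': "i < ?L \<Longrightarrow> b \<in> B \<Longrightarrow> b * vs ! i = vs ! i * b" for i b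
  proof -
    assume "i < ?L" "b \<in> B"
    then have "vs ! i \<in> centralizer B" using vsC nth_mem by blast
    then show ?thesis using \<open>b \<in> B\<close> by (auto simp: centralizer_def)
  qed
  have key: "h n = (\<Sum>i<?L. t (vs!i) (G i n))" for n
  proof -
    have "h n = h (g (f n))" using gf by simp
    also have "\<dots> = h (\<Sum>j<k. lN (f n j) (g (e j)))" using g_dec[of "f n"] f_in by (simp add: image_subset_iff)
    also have "\<dots> = (\<Sum>j<k. lM (f n j) (h (g (e j))))" by (simp add: h_sum h_lin fB)
    also have "\<dots> = (\<Sum>j<k. \<Sum>i<?L. t (f n j * vs!i) (NS (h (g (e j))) i))"
    proof (rule sum.cong[OF refl])
      fix j
      show "lM (f n j) (h (g (e j))) = (\<Sum>i<?L. t (f n j * vs!i) (NS (h (g (e j))) i))"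
        using arg_cong[OF NS[of "h (g (e j))"], of "lM (f n j)"] by (simp add: lM_sum t_l)
    qed
    also have "\<dots> = (\<Sum>j<k. \<Sum>i<?L. t (vs!i) (lN (f n j) (NS (h (g (e j))) i)))"
      by (intro sum.cong refl) (simp add: vsC' fB t_bal)
    also have "\<dots> = (\<Sum>i<?L. \<Sum>j<k. t (vs!i) (lN (f n j) (NS (h (g (e j))) i)))"
      by (rule sum.swap)
    also have "\<dots> = (\<Sum>i<?L. t (vs!i) (G i n))" by (simp add: G_def t_sumR)
    finally show ?thesis .
  qed
  have all: "rM m a' = (\<Sum>i<?L. rM (rM m (W i)) (S i))" for m
  proof (induction m rule: M_induct)
    case 1 then show ?case by (simp add: rM_zero)
  next
    case (2 a n)
    have "t a n = lM a (t 1 n)" by (simp add: t_l)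
    then have "rM (t a n) a' = lM a (h n)" by (simp add: h_def lrM)
    also have "\<dots> = (\<Sum>i<?L. t (a * vs!i) (rN n (S i)))" by (simp add: key lM_sum t_l S)
    also have "\<dots> = (\<Sum>i<?L. rM (rM (t a n) (W i)) (S i))"
      by (rule sum.cong) (simp_all add: W t_r S)
    finally show ?case .
  next
    case (3 x y) then show ?case by (simp add: rM_diff sum_subtractf)
  qed
  have "a' = (\<Sum>i<?L. W i * S i)"
    by (rule rM_inj) (simp add: all rM_sum2 rM_mult)
  then show ?thesis using S by blast
qed

end

theorem proposition3p2:
  fixes B :: "'a::ring_1 set" and B' :: "'b::ring_1 set"
    and lM :: "'a \<Rightarrow> 'm::ab_group_add \<Rightarrow> 'm" and rM :: "'m \<Rightarrow> 'b \<Rightarrow> 'm"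
    and lN :: "'a \<Rightarrow> 'n::ab_group_add \<Rightarrow> 'n" and rN :: "'n \<Rightarrow> 'b \<Rightarrow> 'n"
  assumes "liberal_ext B"
    and "subring B'"
    and "morita_equivalent_via B B' lM rM lN rN"
  shows "liberal_ext B'"
proof -
  obtain vs :: "'a list" where subB: "subring B" and vsC: "set vs \<subseteq> centralizer B"
    and span: "\<forall>a. \<exists>bs. length bs = length vs \<and> set bs \<subseteq> B \<and> a = (\<Sum>i<length vs. vs ! i * bs ! i)"
    using assms(1) unfolding liberal_ext_def by blast
  have mM: "morita_module (UNIV::'a set) (UNIV::'b set) (UNIV::'m set) lM rM"
   and mN: "morita_module B B' (UNIV::'n set) lN rN"
   and ti: "tensor_iso B B' lN rN lM rM"
    using assms(3) unfolding morita_equivalent_via_def by auto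
  obtain Phi :: "(('a \<times> 'n) \<Rightarrow>\<^sub>0 int) \<Rightarrow> 'm" where
       Phi_add: "\<forall>x y. Phi (x + y) = Phi x + Phi y"
   and Phi_surj: "surj Phi"
   and Phi_ker: "{x. Phi x = 0} = tensor_rel B lN"
   and Phi_l: "\<forall>a0 x. Phi (frag_extend (\<lambda>(a, n). frag_of (a0 * a, n)) x) = lM a0 (Phi x)"
   and Phi_r: "\<forall>b'\<in>B'. \<forall>x. Phi (frag_extend (\<lambda>(a, n). frag_of (a, rN n b')) x) = rM (Phi x) b'"
    using ti unfolding tensor_iso_def by (elim exE conjE) (rule that; assumption)
  interpret C: ctx B B' lM rM lN rN Phi vs
    by (rule ctx.intro; fact)
  let ?L = "length vs"
  define W where "W i = (SOME w. \<forall>a n. rM (C.t a n) w = C.t (a * vs ! i) n)" for i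
  have W: "\<forall>a n. rM (C.t a n) (W i) = C.t (a * vs ! i) n" if "i < ?L" for i
  proof -
    have "vs ! i \<in> centralizer B" using vsC that nth_mem by blast
    from C.central_w[OF this] show ?thesis unfolding W_def
      by (rule someI_ex[of "\<lambda>w. \<forall>a n. rM (C.t a n) w = C.t (a * vs ! i) n"])
  qed
  show ?thesis
    unfolding liberal_ext_def
  proof (rule conjI[OF assms(2)], rule exI[of _ "map W [0..<?L]"], intro conjI allI)
    show "set (map W [0..<?L]) \<subseteq> centralizer B'"
      using W C.w_central by fastforce
    fix a' :: 'b
    obtain S where S: "\<forall>i. S i \<in> B'" "a' = (\<Sum>i<?L. W i * S i)"
      using C.main[of W a'] W by blast
    show "\<exists>bs. length bs = length (map W [0..<?L]) \<and> set bs \<subseteq> B' \<and>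
        a' = (\<Sum>i<length (map W [0..<?L]). map W [0..<?L] ! i * bs ! i)"
      by (rule exI[of _ "map S [0..<?L]"]) (use S in auto)
  qed
qed

end
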